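(* If $(X,\mathcal{H})$ is a contraction flow, then $\mathcal{H}$ is a continuous absorptive action on $X$.
   Context: An $\mathbb{R}$-group is an abelian group $E$ (operation written multiplicatively) whose underlying set is a subset of $\mathbb{R}$ containing all positive integers, such that: (RG1) with the natural order of $\mathbb{R}$, $E$ is a totally ordered group; (RG2) with the topology induced from $\mathbb{R}$, $E$ is a locally compact group; (RG3) there is a nonconstant continuous homomorphism $h:E\to\mathbb{R}_+^*$ such that for every $\alpha\in E$ the set $\{\varepsilon\in E:\varepsilon\ge\alpha\}$ is integrable for $h\cdot m$, $m$ a Haar measure on $E$. $e$ is the identity of $E$, $\varepsilon^{-1}$ the group inverse; inequalities refer to the order of $\mathbb{R}$. An action of $E$ on $X$ is a family $(H_\varepsilon)_{\varepsilon\in E}$ of bijections of $X$ with $H_\varepsilon\circ H_{\varepsilon'}=H_{\varepsilon\varepsilon'}$, $H_e=\mathrm{id}_X$; continuous if $(\varepsilon,x)\mapsto H_\varepsilon(x)$ is continuous on $E\times X$; absorptive if some $\omega\in X$ satisfies: for every neighbourhood $V$ of $\omega$ and every $x\in X$ there are a neighbourhood $U$ of $x$ and $\alpha\in E$ with $H_{\varepsilon^{-1}}(U)\subset V$ for all $\varepsilon\le\alpha$. A contraction flow is a pair $(X,\mathcal{H})$ where $X$ is a complete locally compact metric space (metric $d$) not reduced to one point, and $\mathcal{H}=(H_\varepsilon)_{\varepsilon\in E}$ is an action of an $\mathbb{R}$-group $E$ on $X$ such that: (i) for each $x\in X$, $\varepsilon\mapsto H_\varepsilon(x)$ is continuous $E\to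 X$; (ii) for each $\varepsilon\in E$, $\sup_{x\neq y} d(H_\varepsilon(x),H_\varepsilon(y))/d(x,y)<+\infty$; (iii) $\lim_{\varepsilon\to+\infty}\sup_{x\neq y} d(H_\varepsilon(x),H_\varepsilon(y))/d(x,y)=0$. *)

theory Defs
  imports "HOL-Analysis.Analysis" "HOL-Algebra.Group"
begin

text \<open>An R-group: an abelian group whose carrier is a subset of the reals containing
 all positive integers; its group operation is abstract (written multiplicatively).\<close>

definition haar_measure :: "real monoid \<Rightarrow> real measure \<Rightarrow> bool" where
  "haar_measure E m \<longleftrightarrow>
     space m = carrier E \<and>
     sets m = sets (restrict_space borel (carrier E)) \<and>
     (\<forall>A \<in> sets m. \<forall>a \<in> carrier E. emeasure m ((\<lambda>b. a \<otimes>\<^bsub>E\<^esub> b) ` A) = emeasure m A) \<and>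
     (\<forall>K. K \<subseteq> carrier E \<longrightarrow> compact K \<longrightarrow> emeasure m K < \<infinity>) \<and>
     (\<forall>U. openin (top_of_set (carrier E)) U \<longrightarrow> U \<noteq> {} \<longrightarrow> emeasure m U > 0)"

definition R_group :: "real monoid \<Rightarrow> bool" where
  "R_group E \<longleftrightarrow>
     comm_group E \<and>
     (\<forall>n::nat. n \<ge> 1 \<longrightarrow> real n \<in> carrier E) \<and>
     \<comment> \<open>(RG1) totally ordered group for the natural order of the reals\<close>
     (\<forall>a\<in>carrier E. \<forall>b\<in>carrier E. \<forall>c\<in>carrier E. a \<le> b \<longrightarrow> a \<otimes>\<^bsub>E\<^esub> c \<le> b \<otimes>\<^bsub>E\<^esub> c) \<and>
     \<comment> \<open>(RG2) locally compact topological group for the induced topology\<close>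
     continuous_on (carrier E \<times> carrier E) (\<lambda>(a, b). a \<otimes>\<^bsub>E\<^esub> b) \<and>
     continuous_on (carrier E) (\<lambda>a. inv\<^bsub>E\<^esub> a) \<and>
     locally compact (carrier E) \<and>
     \<comment> \<open>(RG3)\<close>
     (\<exists>h :: real \<Rightarrow> real.
        (\<forall>a\<in>carrier E. h a > 0) \<and>
        (\<forall>a\<in>carrier E. \<forall>b\<in>carrier E. h (a \<otimes>\<^bsub>E\<^esub> b) = h a * h b) \<and>
        continuous_on (carrier E) h \<and>
        (\<exists>a\<in>carrier E. \<exists>b\<in>carrier E. h a \<noteq> h b) \<and>
        (\<exists>m. haar_measure E m \<and>
             (\<forall>\<alpha>\<in>carrier E. set_integrable m {\<epsilon>\<in>carrier E. \<epsilon> \<ge> \<alpha>} h)))"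

definition is_action :: "real monoid \<Rightarrow> (real \<Rightarrow> 'a \<Rightarrow> 'a) \<Rightarrow> bool" where
  "is_action E H \<longleftrightarrow>
     (\<forall>\<epsilon>\<in>carrier E. bij (H \<epsilon>)) \<and>
     (\<forall>\<epsilon>\<in>carrier E. \<forall>\<epsilon>'\<in>carrier E. H \<epsilon> \<circ> H \<epsilon>' = H (\<epsilon> \<otimes>\<^bsub>E\<^esub> \<epsilon>')) \<and>
     H \<one>\<^bsub>E\<^esub> = id"

definition continuous_action :: "real monoid \<Rightarrow> (real \<Rightarrow> 'a::topological_space \<Rightarrow> 'a) \<Rightarrow> bool" where
  "continuous_action E H \<longleftrightarrow> continuous_on (carrier E \<times> UNIV) (\<lambda>(\<epsilon>, x). H \<epsilon> x)"

definition absorptive_action :: "real monoid \<Rightarrow> (real \<Rightarrow> 'a::topological_space \<Rightarrow> 'a) \<Rightarrow> bool" where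
  "absorptive_action E H \<longleftrightarrow>
     (\<exists>\<omega>. \<forall>V. open V \<longrightarrow> \<omega> \<in> V \<longrightarrow>
        (\<forall>x. \<exists>U \<alpha>. open U \<and> x \<in> U \<and> \<alpha> \<in> carrier E \<and>
              (\<forall>\<epsilon>\<in>carrier E. \<epsilon> \<le> \<alpha> \<longrightarrow> H (inv\<^bsub>E\<^esub> \<epsilon>) ` U \<subseteq> V)))"

definition lip_const :: "('a::metric_space \<Rightarrow> 'a) \<Rightarrow> real" where
  "lip_const f = (SUP p \<in> {(x, y). x \<noteq> y}. dist (f (fst p)) (f (snd p)) / dist (fst p) (snd p))"

text \<open>The metric space X is the whole of the type 'a.\<close>
definition contraction_flow :: "real monoid \<Rightarrow> (real \<Rightarrow> 'a::metric_space \<Rightarrow> 'a) \<Rightarrow> bool" where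
  "contraction_flow E H \<longleftrightarrow>
     complete (UNIV :: 'a set) \<and> locally compact (UNIV :: 'a set) \<and>
     (\<exists>x y :: 'a. x \<noteq> y) \<and>
     R_group E \<and> is_action E H \<and>
     (\<forall>x. continuous_on (carrier E) (\<lambda>\<epsilon>. H \<epsilon> x)) \<and>
     (\<forall>\<epsilon>\<in>carrier E. bdd_above ((\<lambda>(x, y). dist (H \<epsilon> x) (H \<epsilon> y) / dist x y) ` {(x, y). x \<noteq> y})) \<and>
     ((\<lambda>\<epsilon>. lip_const (H \<epsilon>)) \<longlongrightarrow> 0) (inf at_top (principal (carrier E)))"

end

theory Submission
  imports Defs
begin

lemma lip_bound:
  fixes f :: "'a::metric_space \<Rightarrow> 'a"
  assumes bdd: "bdd_above ((\<lambda>(x, y). dist (f x) (f y) / dist x y) ` {(x, y). x \<noteq> y})"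
    and ne: "\<exists>x y::'a. x \<noteq> y"
  shows "dist (f x) (f y) \<le> lip_const f * dist x y" and "lip_const f \<ge> 0"
proof -
  have eq: "(\<lambda>(x, y). dist (f x) (f y) / dist x y) = (\<lambda>p. dist (f (fst p)) (f (snd p)) / dist (fst p) (snd p))"
    by (auto simp: split_beta')
  have up: "dist (f a) (f b) / dist a b \<le> lip_const f" if "a \<noteq> b" for a b
  proof -
    have "(\<lambda>p. dist (f (fst p)) (f (snd p)) / dist (fst p) (snd p)) (a, b) \<le> lip_const f"
      unfolding lip_const_def
      by (rule cSUP_upper) (use that bdd eq in auto)
    then show ?thesis by simp
  qed
  obtain a b :: 'a where ab: "a \<noteq> b" using ne by blast
  have "0 \<le> dist (f a) (f b) / dist a b" by simp
  also have "\<dots> \<le> lip_const f" using up ab by blast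
  finally show nn: "lip_const f \<ge> 0" .
  show "dist (f x) (f y) \<le> lip_const f * dist x y"
  proof cases
    assume "x = y" then show ?thesis by simp
  next
    assume "x \<noteq> y"
    then have "dist (f x) (f y) / dist x y \<le> lip_const f" using up by blast
    then show ?thesis using \<open>x \<noteq> y\<close> by (simp add: divide_le_eq mult.commute)
  qed
qed

theorem proposition2p5:
  fixes E :: "real monoid" and H :: "real \<Rightarrow> 'a::metric_space \<Rightarrow> 'a"
  assumes "contraction_flow E H"
  shows "continuous_action E H \<and> absorptive_action E H"
proof -
  define L where "L t = lip_const (H t)" for t
  have cf: "complete (UNIV :: 'a set)" "\<exists>x y :: 'a. x \<noteq> y" "R_group E" "is_action E H"
    "\<And>x. continuous_on (carrier E) (\<lambda>\<epsilon>. H \<epsilon> x)"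
    "\<And>\<epsilon>. \<epsilon>\<in>carrier E \<Longrightarrow> bdd_above ((\<lambda>(x, y). dist (H \<epsilon> x) (H \<epsilon> y) / dist x y) ` {(x, y). x \<noteq> y})"
    "(L \<longlongrightarrow> 0) (inf at_top (principal (carrier E)))"
    using assms unfolding contraction_flow_def L_def by auto
  interpret G: comm_group E using cf(3) unfolding R_group_def by auto
  have mono: "\<And>a b c. a\<in>carrier E \<Longrightarrow> b\<in>carrier E \<Longrightarrow> c\<in>carrier E \<Longrightarrow> a \<le> b \<Longrightarrow> a \<otimes>\<^bsub>E\<^esub> c \<le> b \<otimes>\<^bsub>E\<^esub> c"
    using cf(3) unfolding R_group_def by blast
  have ints: "\<And>n::nat. n \<ge> 1 \<Longrightarrow> real n \<in> carrier E"
    using cf(3) unfolding R_group_def by blast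
  have big: "\<exists>\<beta>\<in>carrier E. T \<le> \<beta>" for T :: real
  proof -
    have "real (nat \<lceil>T\<rceil> + 1) \<in> carrier E" by (rule ints) simp
    moreover have "T \<le> real (nat \<lceil>T\<rceil> + 1)" by linarith
    ultimately show ?thesis by blast
  qed
  have Lb: "\<And>t y z. t \<in> carrier E \<Longrightarrow> dist (H t y) (H t z) \<le> L t * dist y z"
    unfolding L_def using lip_bound(1)[OF cf(6) cf(2)] by blast
  have Lnn: "\<And>t. t \<in> carrier E \<Longrightarrow> L t \<ge> 0"
    unfolding L_def using lip_bound(2)[OF cf(6) cf(2)] by blast
  have comp: "\<And>a b x. a\<in>carrier E \<Longrightarrow> b\<in>carrier E \<Longrightarrow> H a (H b x) = H (a \<otimes>\<^bsub>E\<^esub> b) x"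
  proof -
    fix a b x assume "a\<in>carrier E" "b\<in>carrier E"
    then have "H a \<circ> H b = H (a \<otimes>\<^bsub>E\<^esub> b)" using cf(4) unfolding is_action_def by blast
    then show "H a (H b x) = H (a \<otimes>\<^bsub>E\<^esub> b) x" by (metis comp_apply)
  qed
  have ev: "\<exists>T. \<forall>t\<in>carrier E. t \<ge> T \<longrightarrow> L t < c" if "c > 0" for c
  proof -
    have "eventually (\<lambda>t. L t < c) (inf at_top (principal (carrier E)))"
      using order_tendstoD(2)[OF cf(7) that] .
    then have "eventually (\<lambda>t. t \<in> carrier E \<longrightarrow> L t < c) at_top"
      by (simp add: eventually_inf_principal)
    then show ?thesis unfolding eventually_at_top_linorder by blast
  qed
  obtain T1 where T1: "\<forall>t\<in>carrier E. t \<ge> T1 \<longrightarrow> L t < 1/2" using ev[of "1/2"] by auto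
  obtain b0 where b0: "b0 \<in> carrier E" "T1 \<le> b0" using big by blast
  have Lb0: "L b0 < 1/2" using T1 b0 by auto
  have "\<exists>!x\<in>UNIV. H b0 x = x"
  proof (rule Banach_fix[of UNIV "1/2"])
    fix x y :: 'a
    show "dist (H b0 x) (H b0 y) \<le> 1/2 * dist x y"
    proof -
      have "dist (H b0 x) (H b0 y) \<le> L b0 * dist x y" using Lb b0 by blast
      also have "\<dots> \<le> 1/2 * dist x y" using Lb0 by (intro mult_right_mono) auto
      finally show "dist (H b0 x) (H b0 y) \<le> 1/2 * dist x y" .
    qed
  qed (use cf(1) in auto)
  then obtain \<omega> where om: "H b0 \<omega> = \<omega>" and uq: "\<And>y. H b0 y = y \<Longrightarrow> y = \<omega>" by auto
  have fix_all: "H s \<omega> = \<omega>" if s: "s \<in> carrier E" for s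
  proof -
    have "H b0 (H s \<omega>) = H (b0 \<otimes>\<^bsub>E\<^esub> s) \<omega>" using comp b0 s by blast
    also have "\<dots> = H (s \<otimes>\<^bsub>E\<^esub> b0) \<omega>" using G.m_comm b0 s by simp
    also have "\<dots> = H s (H b0 \<omega>)" using comp b0 s by simp
    also have "\<dots> = H s \<omega>" using om by simp
    finally show ?thesis using uq by blast
  qed
  have absorb: "absorptive_action E H"
    unfolding absorptive_action_def
  proof (intro exI[of _ \<omega>] allI impI)
    fix V x assume V: "open V" "\<omega> \<in> V"
    obtain r where r: "r > 0" "ball \<omega> r \<subseteq> V" using V open_contains_ball by blast
    define R where "R = dist x \<omega> + 1"
    have R: "R > 0" unfolding R_def by (simp add: add_nonneg_pos)
    obtain T where T: "\<forall>t\<in>carrier E. t \<ge> T \<longrightarrow> L t < r / R" using ev[of "r/R"] r R by auto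
    obtain \<beta> where \<beta>: "\<beta> \<in> carrier E" "T \<le> \<beta>" using big by blast
    show "\<exists>U \<alpha>. open U \<and> x \<in> U \<and> \<alpha> \<in> carrier E \<and>
              (\<forall>\<epsilon>\<in>carrier E. \<epsilon> \<le> \<alpha> \<longrightarrow> H (inv\<^bsub>E\<^esub> \<epsilon>) ` U \<subseteq> V)"
    proof (intro exI[of _ "ball x 1"] exI[of _ "inv\<^bsub>E\<^esub> \<beta>"] conjI ballI impI)
      show "inv\<^bsub>E\<^esub> \<beta> \<in> carrier E" using \<beta> by simp
      fix \<epsilon> assume e: "\<epsilon> \<in> carrier E" "\<epsilon> \<le> inv\<^bsub>E\<^esub> \<beta>"
      have "\<epsilon> \<otimes>\<^bsub>E\<^esub> (inv\<^bsub>E\<^esub> \<epsilon> \<otimes>\<^bsub>E\<^esub> \<beta>) \<le> inv\<^bsub>E\<^esub> \<beta> \<otimes>\<^bsub>E\<^esub> (inv\<^bsub>E\<^esub> \<epsilon> \<otimes>\<^bsub>E\<^esub> \<beta>)"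
        using mono e \<beta> by simp
      moreover have "\<epsilon> \<otimes>\<^bsub>E\<^esub> (inv\<^bsub>E\<^esub> \<epsilon> \<otimes>\<^bsub>E\<^esub> \<beta>) = \<beta>"
        using e \<beta> by (simp add: G.m_assoc[symmetric])
      moreover have "inv\<^bsub>E\<^esub> \<beta> \<otimes>\<^bsub>E\<^esub> (inv\<^bsub>E\<^esub> \<epsilon> \<otimes>\<^bsub>E\<^esub> \<beta>) = inv\<^bsub>E\<^esub> \<epsilon>"
        using e \<beta> by (metis G.inv_closed G.l_inv G.m_assoc G.m_comm G.r_one)
      ultimately have ge: "T \<le> inv\<^bsub>E\<^esub> \<epsilon>" using \<beta> by simp
      define t where "t = inv\<^bsub>E\<^esub> \<epsilon>"
      have t: "t \<in> carrier E" "L t < r / R" using ge T e unfolding t_def by auto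
      show "H (inv\<^bsub>E\<^esub> \<epsilon>) ` ball x 1 \<subseteq> V"
      proof
        fix z assume "z \<in> H (inv\<^bsub>E\<^esub> \<epsilon>) ` ball x 1"
        then obtain y where y: "dist x y < 1" "z = H t y" unfolding t_def by auto
        have dy: "dist y \<omega> \<le> R" unfolding R_def using y(1) dist_triangle[of y \<omega> x]
          by (simp add: dist_commute)
        have "dist z \<omega> = dist (H t y) (H t \<omega>)" using y fix_all t by simp
        also have "\<dots> \<le> L t * dist y \<omega>" using Lb t by blast
        also have "\<dots> \<le> L t * R" using dy Lnn t by (intro mult_left_mono) auto
        also have "\<dots> < r" using t R by (simp add: less_divide_eq)
        finally show "z \<in> V" using r by (auto simp: dist_commute)
      qed
    qed simp_all
  qed
  have locbd: "\<exists>u K. u < \<epsilon>0 \<and> K \<ge> 0 \<and> (\<forall>\<epsilon>\<in>carrier E. \<epsilon> > u \<longrightarrow> (\<forall>y z. dist (H \<epsilon> y) (H \<epsilon> z) \<le> K * dist y z))"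
    if e0: "\<epsilon>0 \<in> carrier E" for \<epsilon>0
  proof -
    obtain \<beta> where \<beta>: "\<beta> \<in> carrier E" "\<one>\<^bsub>E\<^esub> + 1 \<le> \<beta>" using big by blast
    define ib where "ib = inv\<^bsub>E\<^esub> \<beta>"
    have ib: "ib \<in> carrier E" unfolding ib_def using \<beta> by simp
    have "\<one>\<^bsub>E\<^esub> \<otimes>\<^bsub>E\<^esub> ib \<le> \<beta> \<otimes>\<^bsub>E\<^esub> ib"
      by (rule mono) (use \<beta> ib in auto)
    then have ible: "ib \<le> \<one>\<^bsub>E\<^esub>" using ib \<beta> unfolding ib_def by simp
    have ibne: "ib \<noteq> \<one>\<^bsub>E\<^esub>"
    proof
      assume "ib = \<one>\<^bsub>E\<^esub>"
      then have "\<beta> = \<one>\<^bsub>E\<^esub>" unfolding ib_def using \<beta> by (metis G.inv_inv G.inv_one)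
      then show False using \<beta> by simp
    qed
    define u where "u = \<epsilon>0 \<otimes>\<^bsub>E\<^esub> ib"
    have u: "u \<in> carrier E" unfolding u_def using e0 ib by simp
    have "ib \<otimes>\<^bsub>E\<^esub> \<epsilon>0 \<le> \<one>\<^bsub>E\<^esub> \<otimes>\<^bsub>E\<^esub> \<epsilon>0"
      by (rule mono) (use ible ib e0 in auto)
    then have ule: "u \<le> \<epsilon>0" unfolding u_def using G.m_comm e0 ib by simp
    have une: "u \<noteq> \<epsilon>0"
    proof
      assume "u = \<epsilon>0"
      then have "\<epsilon>0 \<otimes>\<^bsub>E\<^esub> ib = \<epsilon>0 \<otimes>\<^bsub>E\<^esub> \<one>\<^bsub>E\<^esub>" unfolding u_def using e0 by simp
      then have "ib = \<one>\<^bsub>E\<^esub>" using e0 ib by simp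
      then show False using ibne by simp
    qed
    obtain T where T: "\<forall>t\<in>carrier E. t \<ge> T \<longrightarrow> L t < 1" using ev[of 1] by auto
    obtain \<gamma> where \<gamma>: "\<gamma> \<in> carrier E" "T \<le> \<gamma>" using big by blast
    define s where "s = inv\<^bsub>E\<^esub> u \<otimes>\<^bsub>E\<^esub> \<gamma>"
    have s: "s \<in> carrier E" unfolding s_def using u \<gamma> by simp
    have is_: "inv\<^bsub>E\<^esub> s \<in> carrier E" using s by simp
    show ?thesis
    proof -
      have A: "u < \<epsilon>0" using ule une by simp
      have B: "L (inv\<^bsub>E\<^esub> s) \<ge> 0" using Lnn is_ by blast
      have C: "\<forall>\<epsilon>\<in>carrier E. \<epsilon> > u \<longrightarrow> (\<forall>y z. dist (H \<epsilon> y) (H \<epsilon> z) \<le> L (inv\<^bsub>E\<^esub> s) * dist y z)"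
      proof (intro ballI impI allI)
      fix \<epsilon> y z assume e: "\<epsilon> \<in> carrier E" "u < \<epsilon>"
      have "u \<otimes>\<^bsub>E\<^esub> s \<le> \<epsilon> \<otimes>\<^bsub>E\<^esub> s"
        by (rule mono) (use e u s in auto)
      moreover have "u \<otimes>\<^bsub>E\<^esub> s = \<gamma>" unfolding s_def using u \<gamma>
        by (simp add: G.m_assoc[symmetric])
      ultimately have "T \<le> \<epsilon> \<otimes>\<^bsub>E\<^esub> s" using \<gamma> by simp
      then have L1: "L (\<epsilon> \<otimes>\<^bsub>E\<^esub> s) < 1" using T e s by simp
      have es: "\<epsilon> \<otimes>\<^bsub>E\<^esub> s \<in> carrier E" using e s by simp
      have Hdec: "H \<epsilon> w = H (\<epsilon> \<otimes>\<^bsub>E\<^esub> s) (H (inv\<^bsub>E\<^esub> s) w)" for w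
        using comp[OF es is_] e s by (simp add: G.m_assoc)
      have "dist (H \<epsilon> y) (H \<epsilon> z) \<le> L (\<epsilon> \<otimes>\<^bsub>E\<^esub> s) * dist (H (inv\<^bsub>E\<^esub> s) y) (H (inv\<^bsub>E\<^esub> s) z)"
        unfolding Hdec using Lb es by blast
      also have "\<dots> \<le> 1 * dist (H (inv\<^bsub>E\<^esub> s) y) (H (inv\<^bsub>E\<^esub> s) z)"
        using L1 by (intro mult_right_mono) auto
      also have "\<dots> \<le> L (inv\<^bsub>E\<^esub> s) * dist y z" using Lb is_ by simp
      finally show "dist (H \<epsilon> y) (H \<epsilon> z) \<le> L (inv\<^bsub>E\<^esub> s) * dist y z" .
    qed
    show ?thesis using A B C by blast
    qed
  qed
  have cont: "continuous_action E H"
    unfolding continuous_action_def continuous_on_iff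
  proof (intro ballI allI impI)
    fix p :: "real \<times> 'a" and e :: real
    assume p: "p \<in> carrier E \<times> UNIV" and e: "e > 0"
    obtain \<epsilon>0 x0 where px: "p = (\<epsilon>0, x0)" by (cases p)
    have e0: "\<epsilon>0 \<in> carrier E" using p px by auto
    obtain u K where uK: "u < \<epsilon>0" "K \<ge> 0"
      "\<forall>\<epsilon>\<in>carrier E. \<epsilon> > u \<longrightarrow> (\<forall>y z. dist (H \<epsilon> y) (H \<epsilon> z) \<le> K * dist y z)"
      using locbd[OF e0] by blast
    obtain d1 where d1: "d1 > 0" "\<forall>\<epsilon>\<in>carrier E. dist \<epsilon> \<epsilon>0 < d1 \<longrightarrow> dist (H \<epsilon> x0) (H \<epsilon>0 x0) < e/2"
      using cf(5)[of x0] e0 e unfolding continuous_on_iff by (meson half_gt_zero)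
    define d where "d = min d1 (min (\<epsilon>0 - u) (e / (2 * (K + 1))))"
    have d: "d > 0" unfolding d_def using d1 uK e by auto
    show "\<exists>d>0. \<forall>x'\<in>carrier E \<times> UNIV. dist x' p < d \<longrightarrow>
            dist ((\<lambda>(\<epsilon>, x). H \<epsilon> x) x') ((\<lambda>(\<epsilon>, x). H \<epsilon> x) p) < e"
    proof (intro exI[of _ d] conjI ballI impI)
      show "d > 0" by (rule d)
      fix q :: "real \<times> 'a" assume q: "q \<in> carrier E \<times> UNIV" "dist q p < d"
      obtain \<epsilon> x where qx: "q = (\<epsilon>, x)" by (cases q)
      have ec: "\<epsilon> \<in> carrier E" using q qx by auto
      have de: "dist \<epsilon> \<epsilon>0 < d" using q(2) qx px dist_fst_le[of q p] by simp
      have dx: "dist x x0 < d" using q(2) qx px dist_snd_le[of q p] by simp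
      have gu: "\<epsilon> > u" using de unfolding d_def dist_real_def by auto
      have "dist (H \<epsilon> x) (H \<epsilon>0 x0) \<le> dist (H \<epsilon> x) (H \<epsilon> x0) + dist (H \<epsilon> x0) (H \<epsilon>0 x0)"
        by (rule dist_triangle)
      also have "dist (H \<epsilon> x) (H \<epsilon> x0) \<le> K * dist x x0" using uK(3) ec gu by blast
      also have "K * dist x x0 \<le> K * (e / (2 * (K + 1)))"
        using dx uK(2) unfolding d_def by (intro mult_left_mono) auto
      also have "K * (e / (2 * (K + 1))) \<le> e/2"
        using uK(2) e by (simp add: field_simps)
      also have "dist (H \<epsilon> x0) (H \<epsilon>0 x0) < e/2" using d1 ec de unfolding d_def by auto
      finally show "dist ((\<lambda>(\<epsilon>, x). H \<epsilon> x) q) ((\<lambda>(\<epsilon>, x). H \<epsilon> x) p) < e"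
        using qx px by simp
    qed
  qed
  show ?thesis using cont absorb by blast
qed

end
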